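(* There is an absolute constant $C>0$ such that the following holds. Let $K\ge1$, let $\mathbf{\Phi}\in\mathbb{R}^{m\times n}$ satisfy the RIP of order $2K$ with $\delta_{2K}\in(0,1)$, let $\mathbf{x}\in\mathbb{R}^n$ have exactly $K$ nonzero entries, all of equal magnitude, let $\mathbf{v}\in\mathbb{R}^m$, and $\mathbf{y}=\mathbf{\Phi}\mathbf{x}+\mathbf{v}$. If $\mathrm{SNR}\ge\delta_{2K}^{-3/2}$, then the support $\mathcal{T}^K$ output by OMP after $K$ iterations satisfies $\frac{|\mathcal{T}^K\setminus\mathrm{supp}(\mathbf{x})|}{K} \le C\,\delta_{2K}^{1/2}$.
   Context: $\phi_i$ is the $i$-th column of $\mathbf{\Phi}$. RIP: for an integer $s\ge1$, the isometry constant $\delta_s$ of $\mathbf{\Phi}$ is the smallest $c\in[0,1)$ such that $(1-c)\|\mathbf{z}\|_2^2 \le \|\mathbf{\Phi}\mathbf{z}\|_2^2 \le (1+c)\|\mathbf{z}\|_2^2$ for all $s$-sparse $\mathbf{z}$. $\mathrm{SNR} := \|\mathbf{\Phi}\mathbf{x}\|_2^2/\|\mathbf{v}\|_2^2$. OMP with input $\mathbf{\Phi},\mathbf{y},K$: set $\mathcal{T}^0=\emptyset$, $\mathbf{r}^0=\mathbf{y}$; for $k=1,\dots,K$: choose $t^k \in \arg\max_{i\notin\mathcal{T}^{k-1}} |\langle\phi_i,\mathbf{r}^{k-1}\rangle|$ (ties broken arbitrarily), set $\mathcal{T}^k=\mathcal{T}^{k-1}\cup\{t^k\}$, $\mathbf{x}^k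 = \arg\min_{\mathrm{supp}(\mathbf{u})\subseteq\mathcal{T}^k}\|\mathbf{y}-\mathbf{\Phi}\mathbf{u}\|_2$, $\mathbf{r}^k=\mathbf{y}-\mathbf{\Phi}\mathbf{x}^k$. Output $\mathcal{T}^K$, $\mathbf{x}^K$. *)

theory Defs
  imports Complex_Main
begin

text \<open>Matrices Phi in R^(m x n) are functions nat => nat => real (row l < m, column j < n);
vectors are functions nat => real, only the entries below the dimension matter.\<close>

definition mv :: "(nat \<Rightarrow> nat \<Rightarrow> real) \<Rightarrow> nat \<Rightarrow> (nat \<Rightarrow> real) \<Rightarrow> nat \<Rightarrow> real" where
  "mv Phi n z = (\<lambda>l. \<Sum>j<n. Phi l j * z j)"

definition sqnorm :: "nat \<Rightarrow> (nat \<Rightarrow> real) \<Rightarrow> real" where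
  "sqnorm d w = (\<Sum>l<d. (w l)^2)"

definition supp_vec :: "nat \<Rightarrow> (nat \<Rightarrow> real) \<Rightarrow> nat set" where
  "supp_vec n z = {j. j < n \<and> z j \<noteq> 0}"

definition col_inner :: "(nat \<Rightarrow> nat \<Rightarrow> real) \<Rightarrow> nat \<Rightarrow> nat \<Rightarrow> (nat \<Rightarrow> real) \<Rightarrow> real" where
  "col_inner Phi m i r = (\<Sum>l<m. Phi l i * r l)"

definition rip_ineq :: "(nat \<Rightarrow> nat \<Rightarrow> real) \<Rightarrow> nat \<Rightarrow> nat \<Rightarrow> nat \<Rightarrow> real \<Rightarrow> bool" where
  "rip_ineq Phi m n s c \<longleftrightarrow>
     (\<forall>z. card (supp_vec n z) \<le> s \<longrightarrow>
        (1 - c) * sqnorm n z \<le> sqnorm m (mv Phi n z) \<and>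
        sqnorm m (mv Phi n z) \<le> (1 + c) * sqnorm n z)"

definition rip_const :: "(nat \<Rightarrow> nat \<Rightarrow> real) \<Rightarrow> nat \<Rightarrow> nat \<Rightarrow> nat \<Rightarrow> real \<Rightarrow> bool" where
  "rip_const Phi m n s \<delta> \<longleftrightarrow>
     0 \<le> \<delta> \<and> \<delta> < 1 \<and> rip_ineq Phi m n s \<delta> \<and>
     (\<forall>c. 0 \<le> c \<and> c < 1 \<and> rip_ineq Phi m n s c \<longrightarrow> \<delta> \<le> c)"

definition ls_residual :: "(nat \<Rightarrow> nat \<Rightarrow> real) \<Rightarrow> nat \<Rightarrow> nat \<Rightarrow> (nat \<Rightarrow> real) \<Rightarrow> nat set \<Rightarrow> (nat \<Rightarrow> real) \<Rightarrow> bool" where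
  "ls_residual Phi m n y T r \<longleftrightarrow>
     (\<exists>u. (\<forall>j. j \<notin> T \<longrightarrow> u j = 0) \<and>
          (\<forall>w. (\<forall>j. j \<notin> T \<longrightarrow> w j = 0) \<longrightarrow>
               sqnorm m (\<lambda>l. y l - mv Phi n u l) \<le> sqnorm m (\<lambda>l. y l - mv Phi n w l)) \<and>
          r = (\<lambda>l. y l - mv Phi n u l))"

text \<open>ts = [t^1,...,t^K] is a possible run of OMP (any tie-breaking); T^k = set (take k ts).\<close>
definition omp_run :: "(nat \<Rightarrow> nat \<Rightarrow> real) \<Rightarrow> nat \<Rightarrow> nat \<Rightarrow> (nat \<Rightarrow> real) \<Rightarrow> nat \<Rightarrow> nat list \<Rightarrow> bool" where
  "omp_run Phi m n y K ts \<longleftrightarrow>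
     length ts = K \<and>
     (\<forall>k<K. \<exists>r. ls_residual Phi m n y (set (take k ts)) r \<and>
        ts ! k < n \<and> ts ! k \<notin> set (take k ts) \<and>
        (\<forall>i<n. i \<notin> set (take k ts) \<longrightarrow> \<bar>col_inner Phi m i r\<bar> \<le> \<bar>col_inner Phi m (ts ! k) r\<bar>))"

end

theory Submission
  imports Defs "HOL-Analysis.L2_Norm"
begin


definition ip :: "nat \<Rightarrow> (nat \<Rightarrow> real) \<Rightarrow> (nat \<Rightarrow> real) \<Rightarrow> real" where
  "ip m r w = (\<Sum>l<m. r l * w l)"

definition nrm :: "nat \<Rightarrow> (nat \<Rightarrow> real) \<Rightarrow> real" where
  "nrm m w = sqrt (sqnorm m w)"

lemma sqnorm_ge0: "0 \<le> sqnorm m w"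
  unfolding sqnorm_def by (simp add: sum_nonneg)

lemma nrm_ge0: "0 \<le> nrm m w"
  unfolding nrm_def using sqnorm_ge0 by simp

lemma nrm_sq: "(nrm m w)^2 = sqnorm m w"
  unfolding nrm_def using sqnorm_ge0 by simp

lemma nrm_L2: "nrm m w = L2_set w {..<m}"
  unfolding nrm_def L2_set_def sqnorm_def by simp

lemma ip_self: "ip m r r = sqnorm m r"
  unfolding ip_def sqnorm_def by (simp add: power2_eq_square)

lemma ip_CS: "ip m r w \<le> nrm m r * nrm m w"
proof -
  have "ip m r w \<le> (\<Sum>l<m. \<bar>r l\<bar> * \<bar>w l\<bar>)"
    unfolding ip_def by (rule sum_mono) (metis abs_ge_self abs_mult)
  also have "\<dots> \<le> nrm m r * nrm m w" unfolding nrm_L2 by (rule L2_set_mult_ineq)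
  finally show ?thesis .
qed

lemma nrm_triangle: "nrm m (\<lambda>l. f l + g l) \<le> nrm m f + nrm m g"
  unfolding nrm_L2 by (rule L2_set_triangle_ineq)

lemma nrm_uminus: "nrm m (\<lambda>l. - g l) = nrm m g"
  unfolding nrm_def sqnorm_def by simp

lemma nrm_diff_low: "nrm m f \<le> nrm m (\<lambda>l. f l + g l) + nrm m g"
proof -
  have "nrm m f = nrm m (\<lambda>l. (f l + g l) + (- g l))" by simp
  also have "\<dots> \<le> nrm m (\<lambda>l. f l + g l) + nrm m (\<lambda>l. - g l)" by (rule nrm_triangle)
  finally show ?thesis by (simp add: nrm_uminus)
qed

lemma ip_mv: "ip m r (mv Phi n z) = (\<Sum>j<n. z j * col_inner Phi m j r)"
  unfolding ip_def mv_def col_inner_def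
  by (simp add: sum_distrib_left sum_distrib_right mult_ac sum.swap[of _ "{..<m}"])

lemma mv_diff: "mv Phi n (\<lambda>j. a j - b j) l = mv Phi n a l - mv Phi n b l"
  unfolding mv_def by (simp add: right_diff_distrib sum_subtractf)

lemma mv_add_e: "t < n \<Longrightarrow> mv Phi n (\<lambda>j. u j + (if j = t then \<alpha> else 0)) l = mv Phi n u l + \<alpha> * Phi l t"
proof -
  assume t: "t < n"
  have "(\<Sum>j<n. Phi l j * (if j = t then \<alpha> else 0)) = (\<Sum>j<n. if j = t then Phi l t * \<alpha> else 0)"
    by (rule sum.cong) auto
  also have "\<dots> = \<alpha> * Phi l t" using t by simp
  finally show ?thesis unfolding mv_def by (simp add: distrib_left sum.distrib)
qed

lemma mv_e: "t < n \<Longrightarrow> mv Phi n (\<lambda>j. if j = t then 1 else 0) l = Phi l t"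
  unfolding mv_def by (simp add: if_distrib cong: if_cong)

lemma sqnorm_expand:
  "sqnorm m (\<lambda>l. r l - \<alpha> * Phi l t) = sqnorm m r - 2 * \<alpha> * col_inner Phi m t r + \<alpha>^2 * sqnorm m (\<lambda>l. Phi l t)"
  unfolding sqnorm_def col_inner_def
  by (simp add: power2_diff sum.distrib sum_subtractf sum_distrib_left power_mult_distrib mult_ac)

lemma quad_zero:
  fixes b c :: real
  assumes "b \<ge> 0" "\<And>\<alpha>. \<alpha>^2 * b - 2 * \<alpha> * c \<ge> 0"
  shows "c = 0"
proof -
  have b1: "b + 1 > 0" using assms(1) by simp
  have "(c/(b+1))^2 * b - 2 * (c/(b+1)) * c = - (c^2 * (b+2)) / (b+1)^2"
    using b1 by (simp add: divide_simps power2_eq_square) (simp add: algebra_simps)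
  moreover have "(c/(b+1))^2 * b - 2 * (c/(b+1)) * c \<ge> 0" by (rule assms(2))
  ultimately have "c^2 * (b+2) / (b+1)^2 \<le> 0" by simp
  hence "c^2 * (b + 2) \<le> 0" using b1 by (simp add: divide_le_0_iff)
  moreover have "b + 2 > 0" using assms(1) by simp
  ultimately have "c^2 \<le> 0" by (simp add: mult_le_0_iff)
  thus ?thesis by simp
qed




locale omp_setup =
  fixes m n K :: nat and Phi :: "nat \<Rightarrow> nat \<Rightarrow> real" and \<delta> :: real
    and x v :: "nat \<Rightarrow> real"
  assumes K1: "K \<ge> 1" and rip: "rip_const Phi m n (2 * K) \<delta>" and dpos: "0 < \<delta>"
    and cardS: "card (supp_vec n x) = K"
    and eqmag: "\<forall>i j. i \<in> supp_vec n x \<longrightarrow> j \<in> supp_vec n x \<longrightarrow> \<bar>x i\<bar> = \<bar>x j\<bar>"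
begin

abbreviation "y \<equiv> (\<lambda>l. mv Phi n x l + v l)"
abbreviation "S \<equiv> supp_vec n x"
definition "a = \<bar>x (SOME i. i \<in> S)\<bar>"

lemma S_sub: "S \<subseteq> {..<n}" unfolding supp_vec_def by auto
lemma S_fin: "finite S" using S_sub finite_subset by blast

lemma a_prop: "i \<in> S \<Longrightarrow> \<bar>x i\<bar> = a"
proof -
  assume i: "i \<in> S"
  hence "(SOME i. i \<in> S) \<in> S" by (rule someI)
  thus ?thesis unfolding a_def using eqmag i by blast
qed

lemma a_pos: "a > 0"
proof -
  have "S \<noteq> {}" using cardS K1 by auto
  then obtain i where "i \<in> S" by auto
  thus ?thesis using a_prop[of i] unfolding supp_vec_def by auto
qed

lemma d_lt1: "\<delta> < 1" using rip unfolding rip_const_def by auto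

lemma ripI: "card (supp_vec n z) \<le> 2 * K \<Longrightarrow>
   (1 - \<delta>) * sqnorm n z \<le> sqnorm m (mv Phi n z) \<and> sqnorm m (mv Phi n z) \<le> (1 + \<delta>) * sqnorm n z"
  using rip unfolding rip_const_def rip_ineq_def by blast

lemma col_norm: assumes t: "t < n" shows "sqnorm m (\<lambda>l. Phi l t) \<le> 1 + \<delta>"
proof -
  let ?e = "\<lambda>j. if j = t then (1::real) else 0"
  have "supp_vec n ?e \<subseteq> {t}" unfolding supp_vec_def by auto
  hence "card (supp_vec n ?e) \<le> 1" using card_mono[of "{t}" "supp_vec n ?e"] by simp
  hence "card (supp_vec n ?e) \<le> 2 * K" using K1 by linarith
  from ripI[OF this] have "sqnorm m (mv Phi n ?e) \<le> (1 + \<delta>) * sqnorm n ?e" by blast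
  moreover have "sqnorm n ?e = 1"
  proof -
    have "(\<Sum>j<n. (?e j)^2) = (\<Sum>j<n. ?e j)" by (rule sum.cong) auto
    thus ?thesis unfolding sqnorm_def using t by simp
  qed
  moreover have "mv Phi n ?e = (\<lambda>l. Phi l t)" using mv_e[OF t] by auto
  ultimately show ?thesis by simp
qed

lemma orth:
  assumes opt: "\<forall>w. (\<forall>j. j \<notin> T \<longrightarrow> w j = 0) \<longrightarrow>
               sqnorm m (\<lambda>l. y l - mv Phi n u l) \<le> sqnorm m (\<lambda>l. y l - mv Phi n w l)"
    and uT: "\<forall>j. j \<notin> T \<longrightarrow> u j = 0" and jT: "j \<in> T" and jn: "j < n"
  shows "col_inner Phi m j (\<lambda>l. y l - mv Phi n u l) = 0"
proof (rule quad_zero)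
  let ?r = "\<lambda>l. y l - mv Phi n u l"
  show "0 \<le> sqnorm m (\<lambda>l. Phi l j)" by (rule sqnorm_ge0)
  fix \<alpha> :: real
  let ?w = "\<lambda>i. u i + (if i = j then \<alpha> else 0)"
  have ws: "\<forall>i. i \<notin> T \<longrightarrow> ?w i = 0" using uT jT by auto
  have "sqnorm m ?r \<le> sqnorm m (\<lambda>l. y l - mv Phi n ?w l)" using mp[OF spec[OF opt, of ?w] ws] .
  also have "(\<lambda>l. y l - mv Phi n ?w l) = (\<lambda>l. ?r l - \<alpha> * Phi l j)"
    by (rule ext) (simp add: mv_add_e[OF jn])
  finally have A: "sqnorm m ?r \<le> sqnorm m (\<lambda>l. ?r l - \<alpha> * Phi l j)" .
  have B: "sqnorm m (\<lambda>l. ?r l - \<alpha> * Phi l j) = sqnorm m ?r - 2 * \<alpha> * col_inner Phi m j ?r + \<alpha>^2 * sqnorm m (\<lambda>l. Phi l j)"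
    by (rule sqnorm_expand)
  from A B show "0 \<le> \<alpha>^2 * sqnorm m (\<lambda>l. Phi l j) - 2 * \<alpha> * col_inner Phi m j ?r" by linarith
qed

lemma decrease:
  fixes u :: "nat \<Rightarrow> real"
  assumes t: "t < n"
  defines "r \<equiv> (\<lambda>l. y l - mv Phi n u l)"
  defines "c \<equiv> col_inner Phi m t r"
  shows "sqnorm m (\<lambda>l. y l - mv Phi n (\<lambda>i. u i + (if i = t then c / (1+\<delta>) else 0)) l)
           \<le> sqnorm m r - c^2 / (1 + \<delta>)"
proof -
  let ?\<alpha> = "c / (1+\<delta>)"
  have "(\<lambda>l. y l - mv Phi n (\<lambda>i. u i + (if i = t then ?\<alpha> else 0)) l) = (\<lambda>l. r l - ?\<alpha> * Phi l t)"
    unfolding r_def by (rule ext) (simp add: mv_add_e[OF t])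
  hence "sqnorm m (\<lambda>l. y l - mv Phi n (\<lambda>i. u i + (if i = t then ?\<alpha> else 0)) l)
      = sqnorm m r - 2 * ?\<alpha> * c + ?\<alpha>^2 * sqnorm m (\<lambda>l. Phi l t)"
    unfolding c_def by (simp only: sqnorm_expand)
  also have "\<dots> \<le> sqnorm m r - 2 * ?\<alpha> * c + ?\<alpha>^2 * (1 + \<delta>)"
    using col_norm[OF t] by (simp add: mult_left_mono)
  also have "\<dots> = sqnorm m r - c^2 / (1 + \<delta>)"
  proof -
    have d: "1 + \<delta> \<noteq> 0" using dpos by simp
    have "?\<alpha>^2 * (1 + \<delta>) = c^2 / (1+\<delta>)" using d by (simp add: power2_eq_square)
    moreover have "2 * ?\<alpha> * c = 2 * (c^2 / (1+\<delta>))" by (simp add: power2_eq_square)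
    ultimately show ?thesis by linarith
  qed
  finally show ?thesis .
qed

end



context omp_setup
begin

lemma low:
  assumes fT: "finite T" and cT: "card T \<le> K" and wT: "\<forall>j. j \<notin> T \<longrightarrow> w j = 0"
  shows "sqrt (1 - \<delta>) * (sqrt (real (card (S - T))) * a) - nrm m v \<le> nrm m (\<lambda>l. y l - mv Phi n w l)"
proof -
  define z where "z = (\<lambda>j. x j - w j)"
  have "supp_vec n z \<subseteq> S \<union> T" using wT unfolding supp_vec_def z_def by auto
  hence "card (supp_vec n z) \<le> card (S \<union> T)" using S_fin fT by (simp add: card_mono)
  also have "\<dots> \<le> card S + card T" by (rule card_Un_le)
  also have "\<dots> \<le> 2 * K" using cT cardS by simp
  finally have "(1 - \<delta>) * sqnorm n z \<le> sqnorm m (mv Phi n z)" using ripI by blast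
  moreover have "real (card (S - T)) * a^2 \<le> sqnorm n z"
  proof -
    have "(\<Sum>j\<in>S - T. (z j)^2) \<le> (\<Sum>j<n. (z j)^2)"
      by (rule sum_mono2) (use S_sub in auto)
    moreover have "(\<Sum>j\<in>S - T. (z j)^2) = (\<Sum>j\<in>S - T. a^2)"
    proof (rule sum.cong)
      fix j assume "j \<in> S - T"
      hence "z j = x j" "\<bar>x j\<bar> = a" using wT a_prop unfolding z_def by auto
      thus "(z j)^2 = a^2" by (metis power2_abs)
    qed simp
    ultimately show ?thesis unfolding sqnorm_def by simp
  qed
  ultimately have "(1 - \<delta>) * (real (card (S - T)) * a^2) \<le> sqnorm m (mv Phi n z)"
    using d_lt1 by (meson diff_ge_0_iff_ge less_imp_le mult_left_mono order_trans)
  hence "sqrt ((1 - \<delta>) * (real (card (S - T)) * a^2)) \<le> nrm m (mv Phi n z)"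
    unfolding nrm_def by (rule real_sqrt_le_mono)
  moreover have "sqrt ((1 - \<delta>) * (real (card (S - T)) * a^2)) = sqrt (1 - \<delta>) * (sqrt (real (card (S - T))) * a)"
    using a_pos by (simp add: real_sqrt_mult)
  moreover have "nrm m (mv Phi n z) \<le> nrm m (\<lambda>l. mv Phi n z l + v l) + nrm m v"
    by (rule nrm_diff_low)
  moreover have "(\<lambda>l. mv Phi n z l + v l) = (\<lambda>l. y l - mv Phi n w l)"
    unfolding z_def by (auto simp: mv_diff)
  ultimately show ?thesis by simp
qed

lemma cbound:
  assumes opt: "\<forall>w. (\<forall>j. j \<notin> T \<longrightarrow> w j = 0) \<longrightarrow>
               sqnorm m (\<lambda>l. y l - mv Phi n u l) \<le> sqnorm m (\<lambda>l. y l - mv Phi n w l)"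
    and uT: "\<forall>j. j \<notin> T \<longrightarrow> u j = 0"
    and cmax: "\<forall>i<n. i \<notin> T \<longrightarrow> \<bar>col_inner Phi m i (\<lambda>l. y l - mv Phi n u l)\<bar> \<le> c"
  shows "sqnorm m (\<lambda>l. y l - mv Phi n u l) - nrm m (\<lambda>l. y l - mv Phi n u l) * nrm m v
          \<le> real (card (S - T)) * a * c"
proof -
  define r where "r = (\<lambda>l. y l - mv Phi n u l)"
  have orth': "\<And>j. j \<in> T \<Longrightarrow> j < n \<Longrightarrow> col_inner Phi m j r = 0"
    unfolding r_def using orth[OF opt uT] by blast
  have "ip m r (mv Phi n x) = (\<Sum>j<n. x j * col_inner Phi m j r)" by (rule ip_mv)
  also have "\<dots> = (\<Sum>j\<in>S - T. x j * col_inner Phi m j r)"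
    using S_sub orth' by (intro sum.mono_neutral_right) (auto simp: supp_vec_def)
  also have "\<dots> \<le> (\<Sum>j\<in>S - T. a * c)"
  proof (rule sum_mono)
    fix j assume j: "j \<in> S - T"
    hence "\<bar>x j\<bar> = a" "\<bar>col_inner Phi m j r\<bar> \<le> c" using a_prop cmax S_sub unfolding r_def by auto
    hence "\<bar>x j * col_inner Phi m j r\<bar> \<le> a * c" by (simp add: abs_mult mult_left_mono a_pos less_imp_le)
    thus "x j * col_inner Phi m j r \<le> a * c" by simp
  qed
  also have "\<dots> = real (card (S - T)) * a * c" by simp
  finally have A: "ip m r (mv Phi n x) \<le> real (card (S - T)) * a * c" .
  have B: "ip m r (mv Phi n u) = 0"
    unfolding ip_mv using orth' uT by (intro sum.neutral) auto
  have "sqnorm m r = ip m r r" by (simp add: ip_self)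
  also have "\<dots> = (\<Sum>l<m. r l * mv Phi n x l + r l * v l - r l * mv Phi n u l)"
    unfolding ip_def by (rule sum.cong) (simp_all add: r_def algebra_simps)
  also have "\<dots> = ip m r (mv Phi n x) + ip m r v - ip m r (mv Phi n u)"
    unfolding ip_def by (simp add: sum.distrib sum_subtractf)
  finally have "sqnorm m r = ip m r (mv Phi n x) + ip m r v" using B by simp
  moreover have "ip m r v \<le> nrm m r * nrm m v" by (rule ip_CS)
  ultimately show ?thesis using A unfolding r_def by linarith
qed

end



lemma sqrt_ge_self: "0 \<le> (t::real) \<Longrightarrow> t \<le> 1 \<Longrightarrow> t \<le> sqrt t"
proof -
  assume t: "0 \<le> t" "t \<le> 1"
  have "t * t \<le> 1 * t" using t by (intro mult_right_mono) auto
  hence "sqrt (t^2) \<le> sqrt t" by (intro real_sqrt_le_mono) (simp add: power2_eq_square)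
  thus ?thesis using t by simp
qed

lemma lowlin:
  fixes e sg nu :: real
  assumes e: "0 < e" "e < 1/100" and sg: "0 \<le> sg" and nu: "nu \<le> e * sg / 5"
  shows "sqrt (1 - e^2) * sg - nu \<ge> (1 - e/4) * sg"
proof -
  have e2: "e^2 \<le> e/100" using e by (simp add: power2_eq_square)
  have "1 - e^2 \<le> sqrt (1 - e^2)"
    by (rule sqrt_ge_self) (use e e2 in auto)
  hence "(1 - e^2) * sg \<le> sqrt (1 - e^2) * sg" using sg by (simp add: mult_right_mono)
  moreover have "e^2 * sg \<le> e/100 * sg" using mult_right_mono[OF e2 sg] by simp
  moreover have "e * sg \<ge> 0" using e sg by simp
  ultimately show ?thesis using nu by (simp add: algebra_simps)
qed

lemma N1:
  fixes e a s rho nu c :: real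
  assumes e: "0 < e" "e < 1/100" and a: "a > 0" and s: "s > 0" and nu0: "nu \<ge> 0"
    and nu: "nu \<le> e * (sqrt s * a) / 5"
    and rho: "rho \<ge> sqrt (1 - e^2) * (sqrt s * a) - nu"
    and c: "s * a * c \<ge> rho^2 - rho * nu"
  shows "c^2 / (1 + e^2) \<ge> (1 - 2*e) * a^2"
proof -
  define sg where "sg = sqrt s * a"
  have sg0: "sg > 0" using a s unfolding sg_def by simp
  have sgsq: "sg^2 = s * a^2" using s unfolding sg_def by (simp add: power_mult_distrib)
  have r1: "rho \<ge> (1 - e/4) * sg" using lowlin[OF e, of sg nu] sg0 nu rho unfolding sg_def by linarith
  have esg: "e * sg \<ge> 0" using e sg0 by simp
  have r2: "rho - nu \<ge> (1 - e/2) * sg" using r1 nu esg unfolding sg_def[symmetric] by (simp add: algebra_simps)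
  have p1: "(1 - e/4) * sg \<ge> 0" "(1 - e/2) * sg \<ge> 0" using e sg0 by auto
  have "rho * (rho - nu) \<ge> ((1 - e/4) * sg) * ((1 - e/2) * sg)"
    by (rule mult_mono) (use r1 r2 p1 in auto)
  moreover have "((1 - e/4) * sg) * ((1 - e/2) * sg) \<ge> (1 - 3*e/4) * sg^2"
  proof -
    have "((1 - e/4) * sg) * ((1 - e/2) * sg) = (1 - 3*e/4 + e*e/8) * sg^2"
      by (simp add: algebra_simps power2_eq_square)
    moreover have "e*e/8 * sg^2 \<ge> 0" by simp
    ultimately show ?thesis by (simp add: distrib_right)
  qed
  moreover have "rho^2 - rho * nu = rho * (rho - nu)" by (simp add: power2_eq_square algebra_simps)
  ultimately have "s * a * c \<ge> (1 - 3*e/4) * sg^2" using c by linarith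
  hence "s * a * c \<ge> (1 - 3*e/4) * (s * a^2)" using sgsq by simp
  hence "(s * a) * c \<ge> (s * a) * ((1 - 3*e/4) * a)" by (simp add: algebra_simps power2_eq_square)
  hence c1: "c \<ge> (1 - 3*e/4) * a" using s a by (simp add: mult_le_cancel_left_pos)
  have c0: "(1 - 3*e/4) * a \<ge> 0" using e a by simp
  have "c^2 \<ge> ((1 - 3*e/4) * a)^2" by (intro power_mono) (use c1 c0 in auto)
  moreover have "((1 - 3*e/4) * a)^2 \<ge> (1 - 3*e/2) * a^2"
  proof -
    have "((1 - 3*e/4) * a)^2 = (1 - 3*e/2 + (3*e/4)^2) * a^2" by (simp add: algebra_simps power2_eq_square)
    moreover have "(3*e/4)^2 * a^2 \<ge> 0" by simp
    ultimately show ?thesis by (simp add: distrib_right)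
  qed
  moreover have "(1 - 3*e/2) * a^2 \<ge> (1 - 2*e) * a^2 * (1 + e^2)"
  proof -
    have "(1 - 2*e) * (1 + e^2) \<le> 1 - 3*e/2"
    proof -
      have "e^2 \<le> e/100" using e by (simp add: power2_eq_square)
      moreover have "(1 - 2*e) * (1 + e^2) = 1 - 2*e + e^2 - 2*e*e^2" by (simp add: algebra_simps)
      moreover have "2*e*e^2 \<ge> 0" using e by simp
      ultimately show ?thesis using e by linarith
    qed
    hence "(1 - 2*e) * (1 + e^2) * a^2 \<le> (1 - 3*e/2) * a^2" by (intro mult_right_mono) auto
    thus ?thesis by (simp add: ac_simps)
  qed
  ultimately have "c^2 \<ge> (1 - 2*e) * a^2 * (1 + e^2)" by linarith
  moreover have "1 + e^2 > 0" by (simp add: add_pos_nonneg)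
  ultimately show ?thesis by (simp add: pos_le_divide_eq)
qed

lemma nu_bound:
  fixes e a W K P nu :: real
  assumes e: "0 < e" "e < 1/100" and a: "a > 0" and W: "W > 100 * e * K" and K: "K \<ge> 0"
    and nu0: "nu \<ge> 0" and nuP: "nu^2 \<le> e^3 * P^2" and P: "P^2 \<le> (1 + e^2) * K * a^2"
  shows "nu \<le> e * (sqrt W * a) / 5"
proof -
  have "100 * e * K \<ge> 0" using e K by simp
  hence W0: "W \<ge> 0" using W by linarith
  have "e^3 * P^2 \<le> e^3 * ((1 + e^2) * K * a^2)" using P e by (intro mult_left_mono) auto
  also have "\<dots> \<le> e^3 * (2 * K * a^2)"
  proof -
    have "e^2 \<le> e/100" using e by (simp add: power2_eq_square)
    hence "(1 + e^2) \<le> 2" using e by linarith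
    hence "(1 + e^2) * (K * a^2) \<le> 2 * (K * a^2)" using K by (intro mult_right_mono) auto
    hence "e^3 * ((1 + e^2) * (K * a^2)) \<le> e^3 * (2 * (K * a^2))" by (rule mult_left_mono) (use e in simp)
    thus ?thesis by (simp add: ac_simps)
  qed
  also have "\<dots> = (e^2 * a^2 / 50) * (100 * e * K)" by (simp add: power2_eq_square power3_eq_cube)
  also have "\<dots> \<le> (e^2 * a^2 / 50) * W" using W by (intro mult_left_mono) auto
  also have "\<dots> \<le> (e * (sqrt W * a) / 5)^2"
  proof -
    have eq: "(e * (sqrt W * a) / 5)^2 = (e^2 * a^2 * W) / 25" using W0 by (simp add: power_mult_distrib power_divide)
    have "e^2 * a^2 * W \<ge> 0" using W0 by simp
    thus ?thesis unfolding eq by (simp add: ac_simps)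
  qed
  finally have "nu^2 \<le> (e * (sqrt W * a) / 5)^2" using nuP by linarith
  thus ?thesis by (rule power2_le_imp_le) (use e a W0 in simp)
qed

lemma N2:
  fixes e a W K P nu Fn E0 :: real
  assumes e: "0 < e" "e < 1/100" and a: "a > 0" and W: "W > 100 * e * K" and K: "K \<ge> 0"
    and nu0: "nu \<ge> 0" and P0: "P \<ge> 0" and nuP: "nu^2 \<le> e^3 * P^2" and P: "P^2 \<le> (1 + e^2) * K * a^2"
    and Fn: "Fn \<ge> sqrt (1 - e^2) * (sqrt W * a) - nu"
    and E0: "E0 \<le> (P + nu)^2"
    and F: "Fn^2 \<le> E0 - K * ((1 - 2*e) * a^2)"
  shows False
proof -
  have "100 * e * K \<ge> 0" using e K by simp
  hence W0: "W \<ge> 0" using W by linarith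
  have nb: "nu \<le> e * (sqrt W * a) / 5" by (rule nu_bound[OF e a W K nu0 nuP P])
  have sg0: "sqrt W * a \<ge> 0" using a W0 by simp
  have f1: "Fn \<ge> (1 - e/4) * (sqrt W * a)" using lowlin[OF e sg0 nb] Fn by linarith
  have f0: "(1 - e/4) * (sqrt W * a) \<ge> 0" using e sg0 by simp
  have "Fn^2 \<ge> ((1 - e/4) * (sqrt W * a))^2" by (intro power_mono) (use f1 f0 in auto)
  also have "((1 - e/4) * (sqrt W * a))^2 = (1 - e/4)^2 * (W * a^2)" using W0 by (simp add: power_mult_distrib)
  finally have F1: "Fn^2 \<ge> (1 - e/4)^2 * (W * a^2)" .
  have "(1 - e/4)^2 = 1 - e/2 + (e/4)^2" by (simp add: power2_eq_square algebra_simps)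
  moreover have "(e/4)^2 \<ge> 0" by simp
  ultimately have "(1 - e/4)^2 \<ge> 1/2" using e by linarith
  hence "(1/2) * (W * a^2) \<le> (1 - e/4)^2 * (W * a^2)" using W0 by (intro mult_right_mono) auto
  hence F2: "Fn^2 \<ge> W * a^2 / 2" using F1 by linarith
  have "nu^2 \<le> (e * P)^2"
  proof -
    have "e * e^2 \<le> 1 * e^2" by (intro mult_right_mono) (use e in auto)
    moreover have "e^3 = e * e^2" by (simp add: power3_eq_cube power2_eq_square)
    ultimately have "e^3 \<le> e^2" by simp
    hence "e^3 * P^2 \<le> e^2 * P^2" by (intro mult_right_mono) auto
    thus ?thesis using nuP by (simp add: power_mult_distrib)
  qed
  hence nuP': "nu \<le> e * P" by (rule power2_le_imp_le) (use e P0 in simp)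
  have "(P + nu)^2 \<le> ((1 + e) * P)^2" using nuP' nu0 P0 by (intro power_mono) (auto simp: algebra_simps)
  also have "\<dots> = (1 + e)^2 * P^2" by (simp add: power_mult_distrib)
  also have "\<dots> \<le> (1 + e)^2 * ((1 + e^2) * K * a^2)" using P by (intro mult_left_mono) auto
  also have "\<dots> \<le> (1 + 4 * e) * (K * a^2)"
  proof -
    have e2: "e^2 \<le> e/100" using e by (simp add: power2_eq_square)
    have "(1 + e)^2 = 1 + 2*e + e^2" by (simp add: power2_eq_square algebra_simps)
    hence "(1 + e)^2 \<le> 1 + 3 * e" using e2 e by linarith
    moreover have "1 + e^2 \<le> 1 + e/100" using e2 by simp
    ultimately have "(1 + e)^2 * (1 + e^2) \<le> (1 + 3*e) * (1 + e/100)"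
      using e by (intro mult_mono) auto
    also have "\<dots> \<le> 1 + 4 * e" using e2 e by (simp add: algebra_simps power2_eq_square)
    finally have "(1 + e)^2 * (1 + e^2) \<le> 1 + 4 * e" .
    moreover have "K * a^2 \<ge> 0" using K by simp
    ultimately have "(1 + e)^2 * (1 + e^2) * (K * a^2) \<le> (1 + 4 * e) * (K * a^2)" by (rule mult_right_mono)
    thus ?thesis by (simp add: algebra_simps)
  qed
  finally have "E0 \<le> (1 + 4 * e) * (K * a^2)" using E0 by linarith
  hence "W * a^2 / 2 \<le> (1 + 4 * e) * (K * a^2) - K * ((1 - 2*e) * a^2)" using F F2 by linarith
  also have "\<dots> = (6 * e * K) * a^2" by (simp add: algebra_simps)
  finally have "(W / 2) * a^2 \<le> (6 * e * K) * a^2" by simp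
  hence "W / 2 \<le> 6 * e * K" using a by simp
  moreover have "e * K \<ge> 0" using e K by simp
  moreover have "100 * e * K = 100 * (e * K)" "6 * e * K = 6 * (e * K)" by simp_all
  ultimately show False using W by linarith
qed




lemma pw_lemma: fixes d e :: real assumes dpos: "0 < d" and e_def: "e = sqrt d"
  shows "d powr (-3/2) = 1 / e^3"
proof -
  have e0: "e > 0" using dpos unfolding e_def by simp
  have de: "d = e^2" using dpos unfolding e_def by simp
      have "d powr (3/2) = (e powr 2) powr (3/2)" using de e0 by (simp add: powr_numeral)
      also have "\<dots> = e powr 3" by (simp add: powr_powr)
      also have "\<dots> = e^3" using e0 by (simp add: powr_numeral)
      finally have A: "d powr (3/2) = e^3" .
      have m: "(-3/2::real) = - (3/2)" by (rule minus_divide_left[symmetric])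
      have "d powr (-3/2) = d powr (- (3/2))" unfolding m ..
      also have "\<dots> = 1 / d powr (3/2)" by (rule powr_minus_divide)
      finally show ?thesis unfolding A .
qed

context omp_setup
begin

lemma sqnorm_x: "sqnorm n x = real K * a^2"
proof -
  have "sqnorm n x = (\<Sum>j\<in>S. (x j)^2)"
    unfolding sqnorm_def using S_sub by (intro sum.mono_neutral_right) (auto simp: supp_vec_def)
  also have "\<dots> = (\<Sum>j\<in>S. a^2)" using a_prop by (intro sum.cong) (auto, metis power2_abs)
  finally show ?thesis using cardS by simp
qed

lemma main:
  assumes snr: "sqnorm m (mv Phi n x) \<ge> \<delta> powr (-3/2) * sqnorm m v"
    and run: "omp_run Phi m n y K ts"
  shows "real (card (set ts - S)) / real K \<le> 100 * sqrt \<delta>"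
proof -
  define e where "e = sqrt \<delta>"
  have e0: "e > 0" using dpos unfolding e_def by simp
  have de: "\<delta> = e^2" using dpos unfolding e_def by simp
  have e1: "e < 1" using d_lt1 dpos unfolding e_def by simp
  define W where "W = card (S - set ts)"
  have lenK: "length ts = K" using run unfolding omp_run_def by simp
  have cardts: "card (set ts) \<le> K" using card_length[of ts] lenK by simp
  have WK: "W \<le> K" unfolding W_def using card_mono[OF S_fin Diff_subset[of S "set ts"]] cardS by simp
  have diffle: "card (set ts - S) \<le> W"
  proof -
    have "card (set ts - S) = card (set ts) - card (set ts \<inter> S)" by (simp add: card_Diff_subset_Int)
    moreover have "W = card S - card (S \<inter> set ts)" unfolding W_def using S_fin by (simp add: card_Diff_subset_Int)
    ultimately show ?thesis using cardts cardS by (simp add: Int_commute)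
  qed
  have Kpos: "real K > 0" using K1 by simp
  have key: "real W \<le> 100 * e * real K"
  proof (rule ccontr)
    assume "\<not> real W \<le> 100 * e * real K"
    hence Wbig: "real W > 100 * e * real K" by simp
    have es: "e < 1/100"
    proof (rule ccontr)
      assume "\<not> e < 1/100"
      hence "100 * e * real K \<ge> real K" using Kpos by (simp add: mult_le_cancel_right1)
      thus False using Wbig WK by simp
    qed
    define P where "P = nrm m (mv Phi n x)"
    define nu where "nu = nrm m v"
    have P0: "P \<ge> 0" and nu0: "nu \<ge> 0" unfolding P_def nu_def by (auto simp: nrm_ge0)
    have pw: "\<delta> powr (-3/2) = 1 / e^3" by (rule pw_lemma[OF dpos e_def])
    have nuP: "nu^2 \<le> e^3 * P^2"
    proof -
      have "1 / e^3 * sqnorm m v \<le> sqnorm m (mv Phi n x)" using snr unfolding pw .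
      hence "sqnorm m v \<le> e^3 * sqnorm m (mv Phi n x)" using e0 by (simp add: divide_le_eq mult.commute)
      thus ?thesis unfolding nu_def P_def nrm_sq .
    qed
    have Px: "P^2 \<le> (1 + e^2) * real K * a^2"
    proof -
      have "card (supp_vec n x) \<le> 2 * K" using cardS by simp
      from ripI[OF this] have "sqnorm m (mv Phi n x) \<le> (1 + \<delta>) * sqnorm n x" by blast
      thus ?thesis unfolding P_def nrm_sq sqnorm_x de by (simp add: mult.assoc)
    qed
    have nb: "nu \<le> e * (sqrt (real W) * a) / 5"
      by (rule nu_bound[OF e0 es a_pos Wbig _ nu0 nuP Px]) simp
    have ex: "\<forall>k. \<exists>r. k < K \<longrightarrow> ls_residual Phi m n y (set (take k ts)) r \<and>
        ts ! k < n \<and> ts ! k \<notin> set (take k ts) \<and>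
        (\<forall>i<n. i \<notin> set (take k ts) \<longrightarrow> \<bar>col_inner Phi m i r\<bar> \<le> \<bar>col_inner Phi m (ts ! k) r\<bar>)"
      using run unfolding omp_run_def by auto
    from choice[OF ex] obtain R where R0: "\<forall>k. k < K \<longrightarrow> ls_residual Phi m n y (set (take k ts)) (R k) \<and>
        ts ! k < n \<and>
        ts ! k \<notin> set (take k ts) \<and>
        (\<forall>i<n. i \<notin> set (take k ts) \<longrightarrow> \<bar>col_inner Phi m i (R k)\<bar> \<le> \<bar>col_inner Phi m (ts ! k) (R k)\<bar>)" ..
    have R: "\<And>k. k < K \<Longrightarrow> ls_residual Phi m n y (set (take k ts)) (R k) \<and>
        ts ! k < n \<and>
        (\<forall>i<n. i \<notin> set (take k ts) \<longrightarrow> \<bar>col_inner Phi m i (R k)\<bar> \<le> \<bar>col_inner Phi m (ts ! k) (R k)\<bar>)"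
      using R0 by blast
    have ex2: "\<forall>k. \<exists>u. k < K \<longrightarrow> (\<forall>j. j \<notin> set (take k ts) \<longrightarrow> u j = 0) \<and>
          (\<forall>w. (\<forall>j. j \<notin> set (take k ts) \<longrightarrow> w j = 0) \<longrightarrow>
               sqnorm m (\<lambda>l. y l - mv Phi n u l) \<le> sqnorm m (\<lambda>l. y l - mv Phi n w l)) \<and>
          R k = (\<lambda>l. y l - mv Phi n u l)"
      using R unfolding ls_residual_def by blast
    from choice[OF ex2] obtain U where U0: "\<forall>k. k < K \<longrightarrow> (\<forall>j. j \<notin> set (take k ts) \<longrightarrow> U k j = 0) \<and>
          (\<forall>w. (\<forall>j. j \<notin> set (take k ts) \<longrightarrow> w j = 0) \<longrightarrow>
               sqnorm m (\<lambda>l. y l - mv Phi n (U k) l) \<le> sqnorm m (\<lambda>l. y l - mv Phi n w l)) \<and>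
          R k = (\<lambda>l. y l - mv Phi n (U k) l)" ..
    have U: "\<And>k. k < K \<Longrightarrow> (\<forall>j. j \<notin> set (take k ts) \<longrightarrow> U k j = 0) \<and>
          (\<forall>w. (\<forall>j. j \<notin> set (take k ts) \<longrightarrow> w j = 0) \<longrightarrow>
               sqnorm m (\<lambda>l. y l - mv Phi n (U k) l) \<le> sqnorm m (\<lambda>l. y l - mv Phi n w l)) \<and>
          R k = (\<lambda>l. y l - mv Phi n (U k) l)" using U0 by blast
    define D where "D = (1 - 2*e) * a^2"
    define c where "c k = col_inner Phi m (ts ! k) (R k)" for k
    define U' where "U' k = (\<lambda>i. U k i + (if i = ts ! k then c k / (1+\<delta>) else 0))" for k
    have step: "sqnorm m (\<lambda>l. y l - mv Phi n (U' k) l) \<le> sqnorm m (R k) - D" if k: "k < K" for k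
    proof -
      have Uk: "R k = (\<lambda>l. y l - mv Phi n (U k) l)" using U[OF k] by blast
      have tn: "ts ! k < n" using R[OF k] by blast
      have dec: "sqnorm m (\<lambda>l. y l - mv Phi n (U' k) l) \<le> sqnorm m (R k) - (c k)^2 / (1 + \<delta>)"
        unfolding U'_def c_def Uk by (rule decrease[OF tn])
      define s where "s = card (S - set (take k ts))"
      have sW: "real s \<ge> real W"
        unfolding s_def W_def using S_fin set_take_subset[of k ts]
        by (simp add: card_mono Diff_mono finite_Diff)
      have "100 * e * real K > 0" using e0 Kpos by simp
      hence sgt: "real s > 0" using sW Wbig by linarith
      have nbs: "nu \<le> e * (sqrt (real s) * a) / 5"
      proof -
        have "sqrt (real W) * a \<le> sqrt (real s) * a" using sW a_pos by (simp add: mult_right_mono)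
        hence "e * (sqrt (real W) * a) \<le> e * (sqrt (real s) * a)" using e0 by (simp add: mult_left_mono)
        thus ?thesis using nb by simp
      qed
      have fin: "finite (set (take k ts))" by simp
      have ck: "card (set (take k ts)) \<le> K" using card_length[of "take k ts"] k by simp
      have lw: "sqrt (1 - \<delta>) * (sqrt (real s) * a) - nu \<le> nrm m (R k)"
        using low[OF fin ck, of "U k"] U[OF k] unfolding s_def nu_def Uk by blast
      have cb: "sqnorm m (R k) - nrm m (R k) * nu \<le> real s * a * \<bar>c k\<bar>"
        using cbound[of "set (take k ts)" "U k" "\<bar>c k\<bar>"] U[OF k] R[OF k]
        unfolding s_def nu_def c_def Uk by blast
      have "(\<bar>c k\<bar>)^2 / (1 + e^2) \<ge> (1 - 2*e) * a^2"
        by (rule N1[OF e0 es a_pos sgt nu0 nbs, of "nrm m (R k)"])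
           (use lw cb de in \<open>auto simp: nrm_sq\<close>)
      thus ?thesis using dec de unfolding D_def by simp
    qed
    have supp': "\<forall>j. j \<notin> set (take (Suc k) ts) \<longrightarrow> U' k j = 0" if k: "k < K" for k
    proof -
      have "set (take (Suc k) ts) = insert (ts ! k) (set (take k ts))"
        using k lenK by (simp add: take_Suc_conv_app_nth)
      thus ?thesis using U[OF k] unfolding U'_def by auto
    qed
    have tele: "sqnorm m (R k) \<le> sqnorm m (R 0) - real k * D" if "k < K" for k
      using that
    proof (induction k)
      case 0 thus ?case by simp
    next
      case (Suc k)
      have "sqnorm m (R (Suc k)) \<le> sqnorm m (\<lambda>l. y l - mv Phi n (U' k) l)"
        using U[OF Suc.prems] supp'[of k] Suc.prems by auto
      also have "\<dots> \<le> sqnorm m (R k) - D" using step[of k] Suc.prems by simp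
      also have "\<dots> \<le> sqnorm m (R 0) - real k * D - D" using Suc by simp
      finally show ?case by (simp add: algebra_simps)
    qed
    define k0 where "k0 = K - 1"
    have k0: "k0 < K" "Suc k0 = K" using K1 unfolding k0_def by auto
    define Fn where "Fn = nrm m (\<lambda>l. y l - mv Phi n (U' k0) l)"
    have Fsq: "Fn^2 \<le> sqnorm m (R 0) - real K * D"
    proof -
      have "Fn^2 = sqnorm m (\<lambda>l. y l - mv Phi n (U' k0) l)" unfolding Fn_def nrm_sq ..
      also have "\<dots> \<le> sqnorm m (R k0) - D" by (rule step[OF k0(1)])
      also have "\<dots> \<le> sqnorm m (R 0) - real k0 * D - D" using tele[OF k0(1)] by simp
      also have "\<dots> = sqnorm m (R 0) - real K * D" using k0(2) by (simp add: algebra_simps flip: k0(2))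
      finally show ?thesis .
    qed
    have Flow: "sqrt (1 - \<delta>) * (sqrt (real W) * a) - nu \<le> Fn"
    proof -
      have tK: "set (take (Suc k0) ts) = set ts" using k0(2) lenK by simp
      have "card (set ts) \<le> K" by (rule cardts)
      thus ?thesis using low[of "set ts" "U' k0"] supp'[OF k0(1)] tK
        unfolding Fn_def nu_def W_def by auto
    qed
    have R0: "R 0 = y"
    proof -
      have "\<forall>j. U 0 j = 0" using U[OF k0(1)[THEN le_less_trans[OF le0]]] by simp
      hence "\<And>l. mv Phi n (U 0) l = 0" unfolding mv_def by simp
      thus ?thesis using U[OF k0(1)[THEN le_less_trans[OF le0]]] by auto
    qed
    have E0: "sqnorm m (R 0) \<le> (P + nu)^2"
    proof -
      have "nrm m y \<le> P + nu" unfolding P_def nu_def by (rule nrm_triangle)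
      hence "(nrm m y)^2 \<le> (P + nu)^2" using nrm_ge0 by (simp add: power_mono)
      thus ?thesis unfolding R0 nrm_sq .
    qed
    show False
      by (rule N2[OF e0 es a_pos Wbig _ nu0 P0 nuP Px _ E0])
         (use Flow Fsq de in \<open>auto simp: D_def\<close>)
  qed
  have "real (card (set ts - S)) / real K \<le> real W / real K"
    using diffle Kpos by (simp add: divide_right_mono)
  also have "\<dots> \<le> 100 * e" using key Kpos by (simp add: divide_le_eq)
  finally show ?thesis unfolding e_def .
qed

end

theorem corollary1:
  "\<exists>C>0. \<forall>(m::nat) (n::nat) (K::nat) (Phi::nat \<Rightarrow> nat \<Rightarrow> real) (\<delta>::real)
            (x::nat \<Rightarrow> real) (v::nat \<Rightarrow> real) (ts::nat list).
     K \<ge> 1 \<longrightarrow>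
     rip_const Phi m n (2 * K) \<delta> \<longrightarrow> 0 < \<delta> \<longrightarrow>
     card (supp_vec n x) = K \<longrightarrow>
     (\<forall>i j. i \<in> supp_vec n x \<longrightarrow> j \<in> supp_vec n x \<longrightarrow> \<bar>x i\<bar> = \<bar>x j\<bar>) \<longrightarrow>
     sqnorm m (mv Phi n x) \<ge> \<delta> powr (-3/2) * sqnorm m v \<longrightarrow>
     omp_run Phi m n (\<lambda>l. mv Phi n x l + v l) K ts \<longrightarrow>
     real (card (set ts - supp_vec n x)) / real K \<le> C * sqrt \<delta>"
  apply (rule exI[of _ "100::real"])
  apply (intro conjI allI impI)
   apply simp
  apply (rule omp_setup.main)
    apply (rule omp_setup.intro; assumption)
   apply assumption+
  done

end
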